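(* A tree share $\tau\in\mathbb{T}$ is unary if and only if $$\tau\neq\circ\ \wedge\ \forall\tau'\in\mathbb{T}.\ \big(\tau'\bowtie\mathcal{L}\sqsubset\tau\ \leftrightarrow\ \tau'\bowtie\mathcal{R}\sqsubset\tau\big).$$
   Context: A tree share is a finite binary tree whose leaves are labelled $\bullet$ (black) or $\circ$ (white), in canonical form: no subtree has the form $\mathrm{Node}(\bullet,\bullet)$ or $\mathrm{Node}(\circ,\circ)$ (such subtrees are identified with the leaf $\bullet$, resp. $\circ$). $\mathbb{T}$ denotes the set of tree shares. $\tau_1\sqcup\tau_2$ is computed by unfolding both trees (replacing a leaf $\ell$ by $\mathrm{Node}(\ell,\ell)$ as needed) to a common shape, taking Boolean join leafwise ($\bullet$ = true, $\circ$ = false), and refolding to canonical form. $\tau_1\sqsubset\tau_2$ means $\tau_1\sqcup\tau_2=\tau_2$ and $\tau_1\neq\tau_2$. The product $\tau_1\bowtie\tau_2$ is obtained by replacing every $\bullet$ leaf of $\tau_1$ by a copy of $\tau_2$ and refolding to canonical form. $\mathcal{L}=\mathrm{Node}(\bullet,\circ)$, $\mathcal{R}=\mathrm{Node}(\circ,\bullet)$. A unary tree is a tree share with exactly one black leaf. *)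

theory Defs
  imports Main
begin

datatype tree = Lf bool | Nd tree tree

abbreviation black :: tree where "black \<equiv> Lf True"
abbreviation white :: tree where "white \<equiv> Lf False"

fun canonical :: "tree \<Rightarrow> bool" where
  "canonical (Lf b) = True"
| "canonical (Nd l r) = (canonical l \<and> canonical r \<and> \<not> (\<exists>b. l = Lf b \<and> r = Lf b))"

definition tshares :: "tree set" where
  "tshares = {t. canonical t}"

fun mknode :: "tree \<Rightarrow> tree \<Rightarrow> tree" where
  "mknode (Lf a) (Lf b) = (if a = b then Lf a else Nd (Lf a) (Lf b))"
| "mknode l r = Nd l r"

fun norm :: "tree \<Rightarrow> tree" where
  "norm (Lf b) = Lf b"
| "norm (Nd l r) = mknode (norm l) (norm r)"

fun join_raw :: "tree \<Rightarrow> tree \<Rightarrow> tree" where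
  "join_raw (Lf a) (Lf b) = Lf (a \<or> b)"
| "join_raw (Lf a) (Nd l r) = Nd (join_raw (Lf a) l) (join_raw (Lf a) r)"
| "join_raw (Nd l r) (Lf b) = Nd (join_raw l (Lf b)) (join_raw r (Lf b))"
| "join_raw (Nd l r) (Nd l' r') = Nd (join_raw l l') (join_raw r r')"

definition tjoin :: "tree \<Rightarrow> tree \<Rightarrow> tree" where
  "tjoin t1 t2 = norm (join_raw t1 t2)"

definition tsub :: "tree \<Rightarrow> tree \<Rightarrow> bool" where
  "tsub t1 t2 \<longleftrightarrow> tjoin t1 t2 = t2 \<and> t1 \<noteq> t2"

fun bowtie_raw :: "tree \<Rightarrow> tree \<Rightarrow> tree" where
  "bowtie_raw (Lf b) t2 = (if b then t2 else Lf False)"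
| "bowtie_raw (Nd l r) t2 = Nd (bowtie_raw l t2) (bowtie_raw r t2)"

definition bowtie :: "tree \<Rightarrow> tree \<Rightarrow> tree" where
  "bowtie t1 t2 = norm (bowtie_raw t1 t2)"

definition tL :: tree where "tL = Nd black white"
definition tR :: tree where "tR = Nd white black"

fun black_leaves :: "tree \<Rightarrow> nat" where
  "black_leaves (Lf b) = (if b then 1 else 0)"
| "black_leaves (Nd l r) = black_leaves l + black_leaves r"

definition unary :: "tree \<Rightarrow> bool" where
  "unary t \<longleftrightarrow> black_leaves t = 1"

end

theory Submission
  imports Defs
begin

fun sem :: "tree \<Rightarrow> (nat \<Rightarrow> bool) \<Rightarrow> bool" where
  "sem (Lf b) f = b"
| "sem (Nd l r) f = (if f 0 then sem r (\<lambda>n. f (Suc n)) else sem l (\<lambda>n. f (Suc n)))"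

fun dp :: "tree \<Rightarrow> (nat \<Rightarrow> bool) \<Rightarrow> nat" where
  "dp (Lf b) f = 0"
| "dp (Nd l r) f = Suc (if f 0 then dp r (\<lambda>n. f (Suc n)) else dp l (\<lambda>n. f (Suc n)))"

definition pre :: "bool \<Rightarrow> (nat \<Rightarrow> bool) \<Rightarrow> nat \<Rightarrow> bool" where
  "pre c f = (\<lambda>n. case n of 0 \<Rightarrow> c | Suc m \<Rightarrow> f m)"

lemma pre_0[simp]: "pre c f 0 = c" by (simp add: pre_def)
lemma pre_Suc_fun[simp]: "(\<lambda>n. pre c f (Suc n)) = f" by (simp add: pre_def)

lemma sem_Nd_pre: "sem (Nd l r) (pre c f) = (if c then sem r f else sem l f)"
  by (simp add: pre_def)

lemma sem_mknode: "sem (mknode l r) f = sem (Nd l r) f"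
  by (induction l r rule: mknode.induct) auto

lemma sem_norm: "sem (norm t) f = sem t f"
  by (induction t arbitrary: f) (auto simp: sem_mknode)

lemma canon_mknode: "canonical l \<Longrightarrow> canonical r \<Longrightarrow> canonical (mknode l r)"
  by (induction l r rule: mknode.induct) auto

lemma canon_norm: "canonical (norm t)"
  by (induction t) (auto simp: canon_mknode)

lemma norm_canon: "canonical t \<Longrightarrow> norm t = t"
proof (induction t)
  case (Lf x)
  then show ?case by simp
next
  case (Nd l r)
  then show ?case by (cases l; cases r) auto
qed

lemma sem_join: "sem (join_raw a b) f = (sem a f \<or> sem b f)"
  by (induction a b arbitrary: f rule: join_raw.induct) auto

lemma const_lem: "canonical t \<Longrightarrow> (\<forall>f. sem t f = b) \<Longrightarrow> t = Lf b"
proof (induction t)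
  case (Lf x)
  then show ?case by simp
next
  case (Nd l r)
  have "\<forall>f. sem l f = b" using Nd.prems(2) sem_Nd_pre[of l r False] by metis
  moreover have "\<forall>f. sem r f = b" using Nd.prems(2) sem_Nd_pre[of l r True] by metis
  ultimately show ?case using Nd by auto
qed

lemma canon_inj: "canonical t1 \<Longrightarrow> canonical t2 \<Longrightarrow> (\<forall>f. sem t1 f = sem t2 f) \<Longrightarrow> t1 = t2"
proof (induction t1 arbitrary: t2)
  case (Lf b)
  then show ?case using const_lem[of t2 b] by auto
next
  case (Nd l1 r1)
  show ?case
  proof (cases t2)
    case (Lf c)
    then show ?thesis using const_lem[of "Nd l1 r1" c] Nd.prems by auto
  next
    case (Nd l2 r2)
    have "\<forall>f. sem l1 f = sem l2 f" using Nd.prems(3) sem_Nd_pre[of _ _ False] Nd by metis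
    moreover have "\<forall>f. sem r1 f = sem r2 f" using Nd.prems(3) sem_Nd_pre[of _ _ True] Nd by metis
    ultimately show ?thesis using Nd.IH Nd.prems Nd by auto
  qed
qed

lemma tjoin_iff: "canonical t2 \<Longrightarrow> (tjoin t1 t2 = t2) = (\<forall>f. sem t1 f \<longrightarrow> sem t2 f)"
proof
  assume c: "canonical t2" and "tjoin t1 t2 = t2"
  then have "\<forall>f. sem (tjoin t1 t2) f = sem t2 f" by simp
  then have "\<forall>f. (sem t1 f \<or> sem t2 f) = sem t2 f" by (simp add: tjoin_def sem_norm sem_join)
  then show "\<forall>f. sem t1 f \<longrightarrow> sem t2 f" by blast
next
  assume c: "canonical t2" and s: "\<forall>f. sem t1 f \<longrightarrow> sem t2 f"
  have "\<forall>f. sem (tjoin t1 t2) f = sem t2 f" using s by (auto simp add: tjoin_def sem_norm sem_join)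
  then show "tjoin t1 t2 = t2" using canon_inj[OF _ c] canon_norm unfolding tjoin_def by blast
qed

lemma tsub_iff: "canonical t1 \<Longrightarrow> canonical t2 \<Longrightarrow>
   tsub t1 t2 = ((\<forall>f. sem t1 f \<longrightarrow> sem t2 f) \<and> (\<exists>f. sem t2 f \<and> \<not> sem t1 f))"
proof -
  assume c1: "canonical t1" and c2: "canonical t2"
  have "(t1 \<noteq> t2) = (\<exists>f. sem t1 f \<noteq> sem t2 f)" using canon_inj[OF c1 c2] by auto
  then show ?thesis unfolding tsub_def tjoin_iff[OF c2] by blast
qed

lemma dep: "(\<forall>i<dp t f. g i = f i) \<Longrightarrow> dp t g = dp t f \<and> sem t g = sem t f"
proof (induction t arbitrary: f g)
  case (Lf x)
  then show ?case by simp
next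
  case (Nd l r)
  have g0: "g 0 = f 0" using Nd.prems by auto
  show ?case
  proof (cases "f 0")
    case True
    have "\<forall>i<dp r (\<lambda>n. f (Suc n)). g (Suc i) = f (Suc i)" using Nd.prems True by auto
    then show ?thesis using Nd.IH(2)[of "\<lambda>n. f (Suc n)" "\<lambda>n. g (Suc n)"] True g0 by simp
  next
    case False
    have "\<forall>i<dp l (\<lambda>n. f (Suc n)). g (Suc i) = f (Suc i)" using Nd.prems False by auto
    then show ?thesis using Nd.IH(1)[of "\<lambda>n. f (Suc n)" "\<lambda>n. g (Suc n)"] False g0 by simp
  qed
qed

lemma sem_bowtie_raw: "sem (bowtie_raw t s) f = (sem t f \<and> sem s (\<lambda>n. f (n + dp t f)))"
  by (induction t arbitrary: f) auto

lemma sem_bowtie_L: "sem (bowtie t tL) f = (sem t f \<and> f (dp t f) = False)"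
  by (simp add: bowtie_def sem_norm sem_bowtie_raw tL_def)

lemma sem_bowtie_R: "sem (bowtie t tR) f = (sem t f \<and> f (dp t f) = True)"
  by (simp add: bowtie_def sem_norm sem_bowtie_raw tR_def)

lemma bl0: "black_leaves t = 0 \<Longrightarrow> \<not> sem t f"
  by (induction t arbitrary: f) auto

lemma unary_cyl: "black_leaves t = 1 \<Longrightarrow> \<exists>k p. \<forall>g. sem t g = (\<forall>i<k. g i = p i)"
proof (induction t)
  case (Lf x)
  then have "x" by (auto split: if_splits)
  then have "\<forall>g. sem (Lf x) g = (\<forall>i<(0::nat). g i = (\<lambda>_. True) i)" by simp
  then show ?case by blast
next
  case (Nd l r)
  show ?case
  proof (cases "black_leaves l = 0")
    case True
    then have "black_leaves r = 1" using Nd.prems by simp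
    from Nd.IH(2)[OF this] obtain k p where kp: "\<forall>g. sem r g = (\<forall>i<k. g i = p i)" by blast
    have "\<forall>g. sem (Nd l r) g = (\<forall>i<Suc k. g i = pre True p i)"
    proof
      fix g
      show "sem (Nd l r) g = (\<forall>i<Suc k. g i = pre True p i)"
        using bl0[OF True] kp by (auto simp: pre_def All_less_Suc2)
    qed
    then show ?thesis by blast
  next
    case False
    then have a: "black_leaves l = 1" "black_leaves r = 0" using Nd.prems by auto
    from Nd.IH(1)[OF a(1)] obtain k p where kp: "\<forall>g. sem l g = (\<forall>i<k. g i = p i)" by blast
    have "\<forall>g. sem (Nd l r) g = (\<forall>i<Suc k. g i = pre False p i)"
    proof
      fix g
      show "sem (Nd l r) g = (\<forall>i<Suc k. g i = pre False p i)"
        using bl0[OF a(2)] kp by (auto simp: pre_def All_less_Suc2)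
    qed
    then show ?thesis by blast
  qed
qed

lemma swap:
  assumes cyl: "\<forall>g. sem T g = (\<forall>i<k. g i = p i)"
    and sub: "\<forall>f. sem t f \<and> f (dp t f) = b \<longrightarrow> sem T f"
    and str: "\<exists>f. sem T f \<and> \<not> (sem t f \<and> f (dp t f) = b)"
  shows "(\<forall>f. sem t f \<and> f (dp t f) = (\<not>b) \<longrightarrow> sem T f) \<and>
         (\<exists>f. sem T f \<and> \<not> (sem t f \<and> f (dp t f) = (\<not>b)))"
proof
  show "\<forall>f. sem t f \<and> f (dp t f) = (\<not>b) \<longrightarrow> sem T f"
  proof (intro allI impI)
    fix f assume f: "sem t f \<and> f (dp t f) = (\<not>b)"
    define d where "d = dp t f"
    define g where "g = f(d := b)"
    have ag: "\<forall>i<dp t f. g i = f i" by (simp add: g_def d_def)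
    with dep[OF ag] have gd: "dp t g = d" "sem t g" using f d_def by auto
    have "g d = b" by (simp add: g_def)
    then have gT: "sem T g" using sub gd by auto
    show "sem T f"
    proof (cases "d < k")
      case True
      have "\<forall>h. sem T h \<longrightarrow> sem t h \<and> h (dp t h) = b"
      proof (intro allI impI)
        fix h assume h: "sem T h"
        have hg: "\<forall>i<k. h i = g i" using h gT cyl by auto
        then have "\<forall>i<dp t g. h i = g i" using gd True by auto
        with dep[OF this] have "dp t h = d" "sem t h" using gd by auto
        then show "sem t h \<and> h (dp t h) = b" using hg True \<open>g d = b\<close> by auto
      qed
      then show ?thesis using str by blast
    next
      case False
      have "\<forall>i<k. f i = g i" using False by (auto simp: g_def)
      then show ?thesis using gT cyl by auto
    qed
  qed
next
  show "\<exists>f. sem T f \<and> \<not> (sem t f \<and> f (dp t f) = (\<not>b))"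
  proof (rule ccontr)
    assume "\<not> ?thesis"
    then have all: "\<forall>f. sem T f \<longrightarrow> sem t f \<and> f (dp t f) = (\<not>b)" by blast
    have pT: "sem T p" using cyl by auto
    define g where "g = p(dp t p := b)"
    have ag: "\<forall>i<dp t p. g i = p i" by (simp add: g_def)
    with dep[OF ag] have gd: "dp t g = dp t p" "sem t g" using all pT by auto
    have "g (dp t g) = b" using gd by (simp add: g_def)
    then have "sem T g" using sub gd by auto
    then show False using all \<open>g (dp t g) = b\<close> by auto
  qed
qed

lemma swap2:
  assumes cyl: "\<forall>g. sem T g = (\<forall>i<k. g i = p i)"
    and a: "(\<forall>f. sem t f \<and> f (dp t f) = b \<longrightarrow> sem T f) \<and> (\<exists>f. sem T f \<and> \<not> (sem t f \<and> f (dp t f) = b))"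
    and cb: "c \<noteq> b"
  shows "(\<forall>f. sem t f \<and> f (dp t f) = c \<longrightarrow> sem T f) \<and> (\<exists>f. sem T f \<and> \<not> (sem t f \<and> f (dp t f) = c))"
proof -
  have e: "c = (\<not>b)" using cb by auto
  show ?thesis unfolding e using swap[OF cyl conjunct1[OF a] conjunct2[OF a]] .
qed

fun cyl :: "bool list \<Rightarrow> tree" where
  "cyl [] = black"
| "cyl (c # bs) = (if c then Nd white (cyl bs) else Nd (cyl bs) white)"

lemma cyl_ne: "cyl bs \<noteq> white"
  by (cases bs) auto

lemma cyl_Lf: "cyl bs = Lf b \<Longrightarrow> b"
  by (cases bs) (auto split: if_splits)

lemma canon_cyl: "canonical (cyl bs)"
  by (induction bs) (auto dest: cyl_Lf)

lemma bl_cyl: "black_leaves (cyl bs) = 1"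
  by (induction bs) auto


lemma bowtie_cyl_L: "bowtie (cyl q) tL = cyl (q @ [False])"
proof -
  have "bowtie_raw (cyl q) tL = cyl (q @ [False])"
    by (induction q) (auto simp: tL_def)
  then show ?thesis by (simp add: bowtie_def norm_canon canon_cyl)
qed

lemma bowtie_cyl_R: "bowtie (cyl q) tR = cyl (q @ [True])"
proof -
  have "bowtie_raw (cyl q) tR = cyl (q @ [True])"
    by (induction q) (auto simp: tR_def)
  then show ?thesis by (simp add: bowtie_def norm_canon canon_cyl)
qed

lemma sem_cyl_Cons: "sem (cyl (c # bs)) f = (f 0 = c \<and> sem (cyl bs) (\<lambda>n. f (Suc n)))"
  by auto

lemma find_q: "canonical t \<Longrightarrow> t = Nd l r \<Longrightarrow>
  \<exists>q b. (\<forall>f. sem (cyl (q @ [b])) f \<longrightarrow> sem t f) \<and> \<not> (\<forall>f. sem (cyl (q @ [\<not>b])) f \<longrightarrow> sem t f)"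
proof (induction t arbitrary: l r)
  case (Lf x)
  then show ?case by simp
next
  case (Nd l r l' r')
  have cl: "canonical l" "canonical r" using Nd.prems by auto
  show ?case
  proof (cases "l = black")
    case True
    then have "r \<noteq> black" using Nd.prems by auto
    then have "\<exists>f. \<not> sem r f" using const_lem[OF cl(2), of True] by auto
    then obtain f where f: "\<not> sem r f" by blast
    have "\<forall>g. sem (cyl ([] @ [False])) g \<longrightarrow> sem (Nd l r) g" using True by auto
    moreover have "\<not> sem (Nd l r) (pre True f)" using f by (simp add: sem_Nd_pre)
    moreover have "sem (cyl ([] @ [\<not>False])) (pre True f)" by (simp add: pre_def)
    ultimately show ?thesis by blast
  next
    case lnb: False
    show ?thesis
    proof (cases "r = black")
      case True
      have "\<exists>f. \<not> sem l f" using const_lem[OF cl(1), of True] lnb by auto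
      then obtain f where f: "\<not> sem l f" by blast
      have "\<forall>g. sem (cyl ([] @ [True])) g \<longrightarrow> sem (Nd l r) g" using True by auto
      moreover have "\<not> sem (Nd l r) (pre False f)" using f by (simp add: sem_Nd_pre)
      moreover have "sem (cyl ([] @ [\<not>True])) (pre False f)" by (simp add: pre_def)
      ultimately show ?thesis by blast
    next
      case rnb: False
      show ?thesis
      proof (cases l)
        case (Nd a b)
        then obtain q c where qc: "\<forall>f. sem (cyl (q @ [c])) f \<longrightarrow> sem l f"
            "\<not> (\<forall>f. sem (cyl (q @ [\<not>c])) f \<longrightarrow> sem l f)" using Nd.IH(1)[OF cl(1)] by blast
        then obtain f where f: "sem (cyl (q @ [\<not>c])) f" "\<not> sem l f" by blast
        have "\<forall>g. sem (cyl ((False # q) @ [c])) g \<longrightarrow> sem (Nd l r) g" using qc(1) by auto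
        moreover have "sem (cyl ((False # q) @ [\<not>c])) (pre False f)" using f(1)
          by (simp add: pre_def)
        moreover have "\<not> sem (Nd l r) (pre False f)" using f by (simp add: sem_Nd_pre)
        ultimately show ?thesis by blast
      next
        case (Lf x)
        then have lw: "l = white" using lnb by auto
        then obtain a b where rN: "r = Nd a b" using rnb Nd.prems by (cases r) auto
        then obtain q c where qc: "\<forall>f. sem (cyl (q @ [c])) f \<longrightarrow> sem r f"
            "\<not> (\<forall>f. sem (cyl (q @ [\<not>c])) f \<longrightarrow> sem r f)" using Nd.IH(2)[OF cl(2)] by blast
        then obtain f where f: "sem (cyl (q @ [\<not>c])) f" "\<not> sem r f" by blast
        have "\<forall>g. sem (cyl ((True # q) @ [c])) g \<longrightarrow> sem (Nd l r) g" using qc(1) by auto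
        moreover have "sem (cyl ((True # q) @ [\<not>c])) (pre True f)" using f(1)
          by (simp add: pre_def)
        moreover have "\<not> sem (Nd l r) (pre True f)" using f by (simp add: sem_Nd_pre)
        ultimately show ?thesis by blast
      qed
    qed
  qed
qed

theorem lemma4:
  assumes "\<tau> \<in> tshares"
  shows "unary \<tau> \<longleftrightarrow>
    (\<tau> \<noteq> white \<and>
     (\<forall>\<tau>' \<in> tshares. tsub (bowtie \<tau>' tL) \<tau> \<longleftrightarrow> tsub (bowtie \<tau>' tR) \<tau>))"
proof -
  have ct: "canonical \<tau>" using assms by (simp add: tshares_def)
  have cb: "\<And>t s. canonical (bowtie t s)" by (simp add: bowtie_def canon_norm)
  show ?thesis
  proof
    assume u: "unary \<tau>"
    then have bl: "black_leaves \<tau> = 1" by (simp add: unary_def)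
    then have nw: "\<tau> \<noteq> white" by auto
    obtain k p where kp: "\<forall>g. sem \<tau> g = (\<forall>i<k. g i = p i)" using unary_cyl[OF bl] by blast
    have "tsub (bowtie t tL) \<tau> = tsub (bowtie t tR) \<tau>" for t
    proof -
      have L: "tsub (bowtie t tL) \<tau> = ((\<forall>f. sem t f \<and> f (dp t f) = False \<longrightarrow> sem \<tau> f) \<and>
          (\<exists>f. sem \<tau> f \<and> \<not> (sem t f \<and> f (dp t f) = False)))"
        using tsub_iff[OF cb ct] by (simp add: sem_bowtie_L)
      have R: "tsub (bowtie t tR) \<tau> = ((\<forall>f. sem t f \<and> f (dp t f) = True \<longrightarrow> sem \<tau> f) \<and>
          (\<exists>f. sem \<tau> f \<and> \<not> (sem t f \<and> f (dp t f) = True)))"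
        using tsub_iff[OF cb ct] by (simp add: sem_bowtie_R)
      show ?thesis unfolding L R
      proof
        assume a: "(\<forall>f. sem t f \<and> f (dp t f) = False \<longrightarrow> sem \<tau> f) \<and>
          (\<exists>f. sem \<tau> f \<and> \<not> (sem t f \<and> f (dp t f) = False))"
        show "(\<forall>f. sem t f \<and> f (dp t f) = True \<longrightarrow> sem \<tau> f) \<and>
          (\<exists>f. sem \<tau> f \<and> \<not> (sem t f \<and> f (dp t f) = True))"
          by (rule swap2[OF kp a]) simp
      next
        assume a: "(\<forall>f. sem t f \<and> f (dp t f) = True \<longrightarrow> sem \<tau> f) \<and>
          (\<exists>f. sem \<tau> f \<and> \<not> (sem t f \<and> f (dp t f) = True))"
        show "(\<forall>f. sem t f \<and> f (dp t f) = False \<longrightarrow> sem \<tau> f) \<and>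
          (\<exists>f. sem \<tau> f \<and> \<not> (sem t f \<and> f (dp t f) = False))"
          by (rule swap2[OF kp a]) simp
      qed
    qed
    then show "\<tau> \<noteq> white \<and> (\<forall>\<tau>' \<in> tshares. tsub (bowtie \<tau>' tL) \<tau> \<longleftrightarrow> tsub (bowtie \<tau>' tR) \<tau>)"
      using nw by blast
  next
    assume h: "\<tau> \<noteq> white \<and> (\<forall>\<tau>' \<in> tshares. tsub (bowtie \<tau>' tL) \<tau> \<longleftrightarrow> tsub (bowtie \<tau>' tR) \<tau>)"
    show "unary \<tau>"
    proof (rule ccontr)
      assume nu: "\<not> unary \<tau>"
      have "\<exists>l r. \<tau> = Nd l r"
      proof (cases \<tau>)
        case (Lf x)
        then show ?thesis using nu h by (cases x) (simp_all add: unary_def)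
      qed simp
      then obtain l r where lr: "\<tau> = Nd l r" by blast
      obtain q b where qb: "\<forall>f. sem (cyl (q @ [b])) f \<longrightarrow> sem \<tau> f"
          "\<not> (\<forall>f. sem (cyl (q @ [\<not>b])) f \<longrightarrow> sem \<tau> f)" using find_q[OF ct lr] by blast
      have ne: "cyl (q @ [c]) \<noteq> \<tau>" for c
      proof
        assume "cyl (q @ [c]) = \<tau>"
        then have "black_leaves \<tau> = 1" using bl_cyl[of "q @ [c]"] by simp
        then show False using nu by (simp add: unary_def)
      qed
      have t1: "tsub (cyl (q @ [b])) \<tau>" using qb(1) ne tjoin_iff[OF ct] by (simp add: tsub_def)
      have t2: "\<not> tsub (cyl (q @ [\<not>b])) \<tau>" using qb(2) tjoin_iff[OF ct] by (simp add: tsub_def)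
      have "cyl q \<in> tshares" by (simp add: tshares_def canon_cyl)
      then have "tsub (cyl (q @ [False])) \<tau> = tsub (cyl (q @ [True])) \<tau>"
        using h bowtie_cyl_L[of q] bowtie_cyl_R[of q] by metis
      then show False using t1 t2 by (cases b) auto
    qed
  qed
qed

end
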